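(* Let $1,2,3,4$ be four distinct vertices of $G$ such that $G[\{1,2,3,4\}]$ has edge set exactly $\{12,23,34\}$. If $\Gamma_G$ is population monotonic, then $w_{23}\ge w_{12}+w_{34}$.
   Context: $G=(V,E;w)$ is a finite simple graph with edge weights $w:E\to\mathbb{R}$, $w_e>0$ for all $e\in E$; $w_{ij}$ denotes the weight of edge $ij$. The matching game on $G$ is the cooperative game $\Gamma_G=(N,\gamma)$ with player set $N=V$ and, for $S\subseteq N$, $\gamma(S)$ equal to the maximum weight of a matching in the induced subgraph $G[S]$ (so $\gamma(\emptyset)=0$). A population monotonic allocation scheme (PMAS) is a family $(\boldsymbol{x}_S)_{\emptyset\neq S\subseteq N}$ with $\boldsymbol{x}_S=(x_{S,i})_{i\in S}\in\mathbb{R}^S$ such that (efficiency) $\sum_{i\in S}x_{S,i}=\gamma(S)$ for every nonempty $S\subseteq N$, and (monotonicity) $x_{S,i}\le x_{T,i}$ whenever $\emptyset\ne S\subseteq T\subseteq N$ and $i\in S$. $\Gamma_G$ is called population monotonic if it admits a PMAS. *)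

theory Defs
  imports Complex_Main "HOL-Library.Disjoint_Sets"
begin

definition simple_graph :: "'a set \<Rightarrow> 'a set set \<Rightarrow> bool" where
  "simple_graph V E \<longleftrightarrow> finite V \<and> (\<forall>e\<in>E. \<exists>u v. e = {u, v} \<and> u \<noteq> v \<and> u \<in> V \<and> v \<in> V)"

definition matching_in :: "'a set set \<Rightarrow> 'a set \<Rightarrow> 'a set set \<Rightarrow> bool" where
  "matching_in E S M \<longleftrightarrow> M \<subseteq> E \<and> (\<forall>e\<in>M. e \<subseteq> S) \<and> disjoint M"

definition gamma :: "'a set set \<Rightarrow> ('a set \<Rightarrow> real) \<Rightarrow> 'a set \<Rightarrow> real" where
  "gamma E w S = Max {(\<Sum>e\<in>M. w e) | M. matching_in E S M}"

text \<open>Population monotonic allocation scheme on player set N; x S i is the payoff of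
  player i in coalition S.\<close>
definition is_PMAS :: "'a set \<Rightarrow> ('a set \<Rightarrow> real) \<Rightarrow> ('a set \<Rightarrow> 'a \<Rightarrow> real) \<Rightarrow> bool" where
  "is_PMAS N v x \<longleftrightarrow>
     (\<forall>S. S \<subseteq> N \<and> S \<noteq> {} \<longrightarrow> (\<Sum>i\<in>S. x S i) = v S) \<and>
     (\<forall>S T i. S \<noteq> {} \<and> S \<subseteq> T \<and> T \<subseteq> N \<and> i \<in> S \<longrightarrow> x S i \<le> x T i)"

definition population_monotonic :: "'a set \<Rightarrow> ('a set \<Rightarrow> real) \<Rightarrow> bool" where
  "population_monotonic N v \<longleftrightarrow> (\<exists>x. is_PMAS N v x)"

end

theory Submission
  imports Defs
begin

lemma matchings_finite:
  assumes "finite E"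
  shows "finite {(\<Sum>e\<in>M. w e) | M. matching_in E S M}"
proof -
  have "{M. matching_in E S M} \<subseteq> Pow E" by (auto simp: matching_in_def)
  hence "finite {M. matching_in E S M}" using assms by (meson finite_Pow_iff rev_finite_subset)
  thus ?thesis by (simp add: setcompr_eq_image)
qed

lemma gamma_ub:
  assumes "finite E" "\<And>M. matching_in E S M \<Longrightarrow> (\<Sum>e\<in>M. w e) \<le> b"
  shows "gamma E w S \<le> b"
proof -
  have ne: "matching_in E S {}" by (simp add: matching_in_def)
  show ?thesis unfolding gamma_def
    using matchings_finite[OF assms(1), of w S] ne assms(2)
    by (subst Max_le_iff) auto
qed

lemma gamma_lb:
  assumes "finite E" "matching_in E S M"
  shows "(\<Sum>e\<in>M. w e) \<le> gamma E w S"
  unfolding gamma_def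
  using matchings_finite[OF assms(1), of w S] assms(2)
  by (intro Max_ge) auto

lemma gamma_edge:
  assumes "finite E" "e \<in> E"
  shows "w e \<le> gamma E w e"
proof -
  have "matching_in E e {e}" using assms(2) unfolding matching_in_def disjoint_def by blast
  from gamma_lb[OF assms(1) this, of w] show ?thesis by simp
qed

lemma sum_two_le:
  fixes w :: "'a \<Rightarrow> real"
  assumes "M \<subseteq> {A, B}" "\<not> (A \<in> M \<and> B \<in> M)" "w A \<ge> 0" "w B \<ge> 0"
  shows "(\<Sum>e\<in>M. w e) \<le> max (w A) (w B)"
proof (cases "A \<in> M")
  case True
  hence "B \<notin> M" using assms(2) by blast
  hence "M \<subseteq> {A}" using assms(1) by blast
  hence "M = {A}" using True by blast
  thus ?thesis by (simp add: max.cobounded1)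
next
  case False
  hence "M \<subseteq> {B}" using assms(1) by blast
  hence "M = {} \<or> M = {B}" by (rule subset_singletonD)
  thus ?thesis using assms(3,4) by auto
qed

theorem mainTheorem5:
  fixes V :: "'a set" and E :: "'a set set" and w :: "'a set \<Rightarrow> real"
    and v1 v2 v3 v4 :: 'a
  assumes "simple_graph V E"
    and "\<forall>e\<in>E. w e > 0"
    and "v1 \<in> V" "v2 \<in> V" "v3 \<in> V" "v4 \<in> V"
    and "distinct [v1, v2, v3, v4]"
    and "{e \<in> E. e \<subseteq> {v1, v2, v3, v4}} = {{v1, v2}, {v2, v3}, {v3, v4}}"
    and "population_monotonic V (gamma E w)"
  shows "w {v2, v3} \<ge> w {v1, v2} + w {v3, v4}"
proof -
  note d = assms(7)
  have sg: "finite V" "\<forall>e\<in>E. \<exists>u v. e = {u, v} \<and> u \<noteq> v \<and> u \<in> V \<and> v \<in> V"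
    using assms(1) unfolding simple_graph_def by simp_all
  have "E \<subseteq> Pow V"
  proof
    fix e assume "e \<in> E"
    then obtain u v where "e = {u, v}" "u \<in> V" "v \<in> V" using sg(2) by blast
    thus "e \<in> Pow V" by simp
  qed
  hence fE: "finite E" using sg(1) by (meson finite_Pow_iff rev_finite_subset)
  have E3: "{v1,v2} \<in> E \<and> {v2,v3} \<in> E \<and> {v3,v4} \<in> E"
  proof -
    have "{v1,v2} \<in> {e \<in> E. e \<subseteq> {v1, v2, v3, v4}}" "{v2,v3} \<in> {e \<in> E. e \<subseteq> {v1, v2, v3, v4}}"
      "{v3,v4} \<in> {e \<in> E. e \<subseteq> {v1, v2, v3, v4}}" unfolding assms(8) by simp_all
    thus ?thesis by simp
  qed
  hence E12: "{v1,v2} \<in> E" and E23: "{v2,v3} \<in> E" and E34: "{v3,v4} \<in> E" by auto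
  have p12: "w {v1,v2} > 0" and p23: "w {v2,v3} > 0" and p34: "w {v3,v4} > 0"
    using assms(2) E12 E23 E34 by auto
  obtain x where x: "is_PMAS V (gamma E w) x"
    using assms(9) by (auto simp: population_monotonic_def)
  have eff: "\<And>S. S \<subseteq> V \<Longrightarrow> S \<noteq> {} \<Longrightarrow> (\<Sum>i\<in>S. x S i) = gamma E w S"
    using x by (auto simp: is_PMAS_def)
  have mon: "\<And>S T i. S \<noteq> {} \<Longrightarrow> S \<subseteq> T \<Longrightarrow> T \<subseteq> V \<Longrightarrow> i \<in> S \<Longrightarrow> x S i \<le> x T i"
    using x unfolding is_PMAS_def by blast
  have emp: "matching_in E S {}" for S by (simp add: matching_in_def)
  have sing: "0 \<le> x {v} v" if "v \<in> V" for v
  proof -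
    have "x {v} v = gamma E w {v}" using eff[of "{v}"] that by simp
    moreover have "0 \<le> gamma E w {v}" using gamma_lb[OF fE emp, of w "{v}"] by simp
    ultimately show ?thesis by simp
  qed
  have nn: "0 \<le> x S v" if "S \<subseteq> V" "v \<in> S" for S v
    using sing[of v] mon[of "{v}" S v] that by auto
  have inE: "e \<in> {{v1, v2}, {v2, v3}, {v3, v4}}" if "e \<in> E" "e \<subseteq> S" "S \<subseteq> {v1,v2,v3,v4}" for e S
  proof -
    have "e \<in> {e \<in> E. e \<subseteq> {v1, v2, v3, v4}}" using that by auto
    thus ?thesis unfolding assms(8) .
  qed
  have g12: "w {v1,v2} \<le> gamma E w {v1,v2}"
    using gamma_edge[OF fE E12] .
  have g34: "w {v3,v4} \<le> gamma E w {v3,v4}"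
    using gamma_edge[OF fE E34] .
  have g23l: "w {v2,v3} \<le> gamma E w {v2,v3}"
    using gamma_edge[OF fE E23] .
  have g23u: "gamma E w {v2,v3} \<le> w {v2,v3}"
  proof (rule gamma_ub[OF fE])
    fix M assume M: "matching_in E {v2,v3} M"
    have "M \<subseteq> {{v2,v3}}"
    proof
      fix e assume e: "e \<in> M"
      hence "e \<in> E" "e \<subseteq> {v2,v3}" using M by (auto simp: matching_in_def)
      moreover have "e \<in> {{v1, v2}, {v2, v3}, {v3, v4}}" using inE[OF calculation] by blast
      ultimately show "e \<in> {{v2,v3}}" using d by (auto simp: doubleton_eq_iff)
    qed
    thus "(\<Sum>e\<in>M. w e) \<le> w {v2,v3}" using p23 by (cases "M = {}") (auto dest: subset_singletonD)
  qed
  have g123: "gamma E w {v1,v2,v3} \<le> max (w {v1,v2}) (w {v2,v3})"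
  proof (rule gamma_ub[OF fE])
    fix M assume M: "matching_in E {v1,v2,v3} M"
    have "M \<subseteq> {{v1,v2},{v2,v3}}"
    proof
      fix e assume e: "e \<in> M"
      hence "e \<in> E" "e \<subseteq> {v1,v2,v3}" using M by (auto simp: matching_in_def)
      moreover have "e \<in> {{v1, v2}, {v2, v3}, {v3, v4}}" using inE[OF calculation] by blast
      ultimately show "e \<in> {{v1,v2},{v2,v3}}" using d by auto
    qed
    moreover have "\<not> ({v1,v2} \<in> M \<and> {v2,v3} \<in> M)"
    proof
      assume h: "{v1,v2} \<in> M \<and> {v2,v3} \<in> M"
      have "{v1,v2} \<noteq> {v2,v3}" using d by (auto simp: doubleton_eq_iff)
      hence "{v1,v2} \<inter> {v2,v3} = {}" using M h by (intro disjointD) (auto simp: matching_in_def)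
      moreover have "v2 \<in> {v1,v2} \<inter> {v2,v3}" by simp
      ultimately show False by simp
    qed
    ultimately show "(\<Sum>e\<in>M. w e) \<le> max (w {v1,v2}) (w {v2,v3})"
      using sum_two_le p12 p23 by (metis less_eq_real_def)
  qed
  have g234: "gamma E w {v2,v3,v4} \<le> max (w {v2,v3}) (w {v3,v4})"
  proof (rule gamma_ub[OF fE])
    fix M assume M: "matching_in E {v2,v3,v4} M"
    have "M \<subseteq> {{v2,v3},{v3,v4}}"
    proof
      fix e assume e: "e \<in> M"
      hence "e \<in> E" "e \<subseteq> {v2,v3,v4}" using M by (auto simp: matching_in_def)
      moreover have "e \<in> {{v1, v2}, {v2, v3}, {v3, v4}}" using inE[OF calculation] by blast
      ultimately show "e \<in> {{v2,v3},{v3,v4}}" using d by auto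
    qed
    moreover have "\<not> ({v2,v3} \<in> M \<and> {v3,v4} \<in> M)"
    proof
      assume h: "{v2,v3} \<in> M \<and> {v3,v4} \<in> M"
      have "{v2,v3} \<noteq> {v3,v4}" using d by (auto simp: doubleton_eq_iff)
      hence "{v2,v3} \<inter> {v3,v4} = {}" using M h by (intro disjointD) (auto simp: matching_in_def)
      moreover have "v3 \<in> {v2,v3} \<inter> {v3,v4}" by simp
      ultimately show False by simp
    qed
    ultimately show "(\<Sum>e\<in>M. w e) \<le> max (w {v2,v3}) (w {v3,v4})"
      using sum_two_le p23 p34 by (metis less_eq_real_def)
  qed
  have V: "v1 \<in> V" "v2 \<in> V" "v3 \<in> V" "v4 \<in> V" using assms(3-6) by auto
  have e12: "x {v1,v2} v1 + x {v1,v2} v2 = gamma E w {v1,v2}"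
    using eff[of "{v1,v2}"] V d by simp
  have e23: "x {v2,v3} v2 + x {v2,v3} v3 = gamma E w {v2,v3}"
    using eff[of "{v2,v3}"] V d by simp
  have e34: "x {v3,v4} v3 + x {v3,v4} v4 = gamma E w {v3,v4}"
    using eff[of "{v3,v4}"] V d by simp
  have e123: "x {v1,v2,v3} v1 + x {v1,v2,v3} v2 + x {v1,v2,v3} v3 = gamma E w {v1,v2,v3}"
    using eff[of "{v1,v2,v3}"] V d by simp
  have e234: "x {v2,v3,v4} v2 + x {v2,v3,v4} v3 + x {v2,v3,v4} v4 = gamma E w {v2,v3,v4}"
    using eff[of "{v2,v3,v4}"] V d by simp
  have m: "x {v1,v2} v1 \<le> x {v1,v2,v3} v1" "x {v1,v2} v2 \<le> x {v1,v2,v3} v2"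
    "x {v2,v3} v2 \<le> x {v1,v2,v3} v2" "x {v2,v3} v3 \<le> x {v1,v2,v3} v3"
    "x {v2,v3} v2 \<le> x {v2,v3,v4} v2" "x {v2,v3} v3 \<le> x {v2,v3,v4} v3"
    "x {v3,v4} v3 \<le> x {v2,v3,v4} v3" "x {v3,v4} v4 \<le> x {v2,v3,v4} v4"
    by (intro mon; use V in auto)+
  have n: "0 \<le> x {v1,v2} v1" "0 \<le> x {v1,v2} v2" "0 \<le> x {v2,v3} v2" "0 \<le> x {v2,v3} v3"
    "0 \<le> x {v3,v4} v3" "0 \<le> x {v3,v4} v4"
    by (intro nn; use V in auto)+
  have a: "x {v2,v3} v2 \<ge> min (w {v1,v2}) (w {v2,v3})"
  proof (cases "w {v1,v2} \<le> w {v2,v3}")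
    case True
    hence "gamma E w {v1,v2,v3} \<le> w {v2,v3}" using g123 by (simp add: max_def)
    hence "x {v2,v3} v2 \<ge> w {v1,v2}" using e12 e23 e123 m n g12 g23l g23u by linarith
    thus ?thesis using True by (simp add: min_def)
  next
    case False
    hence "gamma E w {v1,v2,v3} \<le> w {v1,v2}" using g123 by (simp add: max_def)
    hence "x {v2,v3} v2 \<ge> w {v2,v3}" using e12 e23 e123 m n g12 g23l g23u by linarith
    thus ?thesis using False by (simp add: min_def)
  qed
  have b: "x {v2,v3} v3 \<ge> min (w {v3,v4}) (w {v2,v3})"
  proof (cases "w {v3,v4} \<le> w {v2,v3}")
    case True
    hence "gamma E w {v2,v3,v4} \<le> w {v2,v3}" using g234 by (simp add: max_def)
    hence "x {v2,v3} v3 \<ge> w {v3,v4}" using e34 e23 e234 m n g34 g23l g23u by linarith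
    thus ?thesis using True by (simp add: min_def)
  next
    case False
    hence "gamma E w {v2,v3,v4} \<le> w {v3,v4}" using g234 by (simp add: max_def)
    hence "x {v2,v3} v3 \<ge> w {v2,v3}" using e34 e23 e234 m n g34 g23l g23u by linarith
    thus ?thesis using False by (simp add: min_def)
  qed
  have c: "x {v2,v3} v2 + x {v2,v3} v3 = w {v2,v3}" using e23 g23l g23u by linarith
  show ?thesis
  proof (cases "w {v1,v2} \<le> w {v2,v3} \<and> w {v3,v4} \<le> w {v2,v3}")
    case True
    thus ?thesis using a b c by (simp add: min_def)
  next
    case False
    thus ?thesis using a b c p12 p23 p34 by (auto simp: min_def split: if_splits)
  qed
qed

end
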